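(* For any integers $Q,k\ge2$ there exists $\epsilon_{Q,k}>0$ such that for every $u\in\mathbb{R}^2$, there are at most four distinct elements $d\in\pm D_{Q!,k}$ for which $|u\cdot d-\frac ab|<\epsilon_{Q,k}$ for some non-zero coprime integers $a,b$ with $2\le b\le Q$. Moreover, the set of all such $d\in\pm D_{Q!,k}$ is centrally symmetric.
   Context: For positive integers $q,k$ with $k\ge2$, let $X_{q,k}=\prod_{j=1}^{k-1}(q^{k+j}+q^{k-j}+1)$ and let $D_{q,k}\subseteq\mathbb{Z}^2$ consist of the points $\frac{X_{q,k}}{q^{k+j}+q^{k-j}+1}\left(q^{k+j}-q^{k-j},\,-q^j-2q^k\right)$ for $j=1,\ldots,k-1$; $\pm D_{q,k}=\{\pm d: d\in D_{q,k}\}$. A set $S$ is centrally symmetric if $S=-S$. $u\cdot d$ is the dot product. *)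

theory Defs
  imports Complex_Main
begin

definition Xqk :: "int \<Rightarrow> nat \<Rightarrow> int" where
  "Xqk q k = (\<Prod>j\<in>{1..k-1}. q^(k+j) + q^(k-j) + 1)"

text \<open>D_{q,k}: the points X/(q^{k+j}+q^{k-j}+1) * (q^{k+j}-q^{k-j}, -q^j-2q^k), j=1..k-1
  (the quotient is an exact integer division since the denominator is a factor of X).\<close>
definition Dqk :: "int \<Rightarrow> nat \<Rightarrow> (int \<times> int) set" where
  "Dqk q k = (\<lambda>j. let c = Xqk q k div (q^(k+j) + q^(k-j) + 1)
                   in (c * (q^(k+j) - q^(k-j)), c * (- (q^j) - 2 * q^k))) ` {1..k-1}"

definition negpt :: "int \<times> int \<Rightarrow> int \<times> int" where
  "negpt d = (- fst d, - snd d)"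

definition pmDqk :: "int \<Rightarrow> nat \<Rightarrow> (int \<times> int) set" where
  "pmDqk q k = Dqk q k \<union> negpt ` Dqk q k"

definition dotp :: "real \<times> real \<Rightarrow> int \<times> int \<Rightarrow> real" where
  "dotp u d = fst u * of_int (fst d) + snd u * of_int (snd d)"

end

theory Submission imports Defs begin

definition vv :: "int \<Rightarrow> nat \<Rightarrow> nat \<Rightarrow> int \<times> int" where
  "vv q k x = (q^(k+x) - q^(k-x), - (q^x) - 2 * q^k)"
definition den :: "int \<Rightarrow> nat \<Rightarrow> nat \<Rightarrow> int" where
  "den q k x = q^(k+x) + q^(k-x) + 1"
definition cc :: "int \<Rightarrow> nat \<Rightarrow> nat \<Rightarrow> int" where
  "cc q k x = Xqk q k div den q k x"
definition dd :: "int \<Rightarrow> nat \<Rightarrow> nat \<Rightarrow> int \<times> int" where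
  "dd q k x = (cc q k x * fst (vv q k x), cc q k x * snd (vv q k x))"
definition det2 :: "int \<times> int \<Rightarrow> int \<times> int \<Rightarrow> int" where
  "det2 a b = fst a * snd b - snd a * fst b"

lemma Dqk_eq: "Dqk q k = dd q k ` {1..k-1}"
  unfolding Dqk_def dd_def cc_def vv_def den_def by (simp add: Let_def)

lemma det2_dd: "det2 (dd q k x) (dd q k y) = cc q k x * cc q k y * det2 (vv q k x) (vv q k y)"
  unfolding det2_def dd_def by (simp add: algebra_simps)

lemma pows: fixes q :: int and i s t j k :: nat
  assumes st: "j = i + Suc s" "k = j + Suc t"
  shows "q^(k+i) = (q^i)^2*q^s*q^t*q^2" "q^(k-i) = q^s*q^t*q^2" "q^j = q^i*q^s*q" "q^k = q^i*q^s*q^t*q^2" "q^(k+j) = (q^i)^2*(q^s)^2*q^t*q^3" "q^(k-j) = q^t*q" "q^(k+i-j) = q^i*q^t*q"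
proof -
  have e0: "k+i = i+(i+(s+(t+2)))" using st by auto
  show "q^(k+i) = (q^i)^2*q^s*q^t*q^2" unfolding e0 by (simp only: power_add; (simp add: power2_eq_square power3_eq_cube mult_ac)?)
  have e1: "k-i = s+t+2" using st by auto
  show "q^(k-i) = q^s*q^t*q^2" unfolding e1 by (simp only: power_add; (simp add: power2_eq_square power3_eq_cube mult_ac)?)
  have e2: "j = i+s+1" using st by auto
  show "q^j = q^i*q^s*q" unfolding e2 by (simp only: power_add; (simp add: power2_eq_square power3_eq_cube mult_ac)?)
  have e3: "k = i+s+t+2" using st by auto
  show "q^k = q^i*q^s*q^t*q^2" unfolding e3 by (simp only: power_add; (simp add: power2_eq_square power3_eq_cube mult_ac)?)
  have e4: "k+j = i+(i+(s+(s+(t+3))))" using st by auto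
  show "q^(k+j) = (q^i)^2*(q^s)^2*q^t*q^3" unfolding e4 by (simp only: power_add; (simp add: power2_eq_square power3_eq_cube mult_ac)?)
  have e5: "k-j = t+1" using st by auto
  show "q^(k-j) = q^t*q" unfolding e5 by (simp only: power_add; (simp add: power2_eq_square power3_eq_cube mult_ac)?)
  have e6: "k+i-j = i+t+1" using st by auto
  show "q^(k+i-j) = q^i*q^t*q" unfolding e6 by (simp only: power_add; (simp add: power2_eq_square power3_eq_cube mult_ac)?)
qed

lemma ident: fixes A B C q :: int shows
 "((A^2*B*C*q^2 - B*C*q^2) * (- (A*B*q) - 2*(A*B*C*q^2)) - (- A - 2*(A*B*C*q^2)) * (A^2*B^2*C*q^3 - C*q))
   = (A*C*q) * (q * (2*A^2*B^3*C*q^3 - 2*A^2*B^2*C*q^2 + 2*B^2*C*q^2 - 2*B*C*q + B^2*q) - 1)"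
  by algebra

lemma det_vv:
  assumes "i < j" "j < k"
  shows "\<exists>m. det2 (vv q k i) (vv q k j) = q^(k+i-j) * (q*m - 1)"
proof -
  define s where "s = j - i - 1"
  define t where "t = k - j - 1"
  have st: "j = i + Suc s" "k = j + Suc t" unfolding s_def t_def using assms by auto
  note p = pows[OF st, of q]
  have "det2 (vv q k i) (vv q k j) = q^(k+i-j) * (q * (2*(q^i)^2*(q^s)^3*(q^t)*q^3 - 2*(q^i)^2*(q^s)^2*(q^t)*q^2
     + 2*(q^s)^2*(q^t)*q^2 - 2*(q^s)*(q^t)*q + (q^s)^2*q) - 1)"
    unfolding det2_def vv_def fst_conv snd_conv p
    using ident[of "q^i" "q^s" "q^t" q] by (simp only: mult.assoc)
  then show ?thesis by blast
qed

lemma det_ident: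
  fixes u :: "real \<times> real"
  shows "of_int (det2 b c) * dotp u a - of_int (det2 a c) * dotp u b + of_int (det2 a b) * dotp u c = 0"
  unfolding det2_def dotp_def by (simp add: algebra_simps)


lemma cc_mod:
  assumes q: "q \<ge> 2" and x: "1 \<le> x" "x \<le> k - 1"
  shows "q dvd (cc q k x - 1)"
proof -
  have fin: "finite {1..k-1}" by simp
  have xin: "x \<in> {1..k-1}" using x by simp
  have dpos: "den q k y > 0" for y unfolding den_def using q by (simp add: add_pos_nonneg)
  have X: "Xqk q k = den q k x * (\<Prod>y\<in>{1..k-1}-{x}. den q k y)"
    unfolding Xqk_def den_def using prod.remove[OF fin xin, of "\<lambda>y. q^(k+y) + q^(k-y) + 1"] by simp
  have ccx: "cc q k x = (\<Prod>y\<in>{1..k-1}-{x}. den q k y)"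
    unfolding cc_def X using dpos[of x] by simp
  have dm: "den q k y mod q = 1" if "y \<in> {1..k-1}-{x}" for y
  proof -
    have "k - y \<ge> 1" using that by auto
    then have "q dvd q^(k-y)" by (metis Suc_le_eq One_nat_def dvd_power)
    moreover have "q dvd q^(k+y)" using that by (simp add: dvd_power)
    ultimately obtain a b where "q^(k-y) = q*a" "q^(k+y) = q*b" by (meson dvdE)
    then have "den q k y = 1 + q*(a+b)" unfolding den_def by (simp add: algebra_simps)
    then show ?thesis using q by simp
  qed
  have "cc q k x mod q = (\<Prod>y\<in>{1..k-1}-{x}. den q k y mod q) mod q"
    unfolding ccx by (simp add: mod_prod_eq)
  also have "\<dots> = 1" using dm q by simp
  finally have "cc q k x mod q = 1 mod q" using q by simp
  then show ?thesis by (simp add: mod_eq_dvd_iff)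
qed

lemma key:
  assumes q: "q \<ge> 2" and ijl: "1 \<le> i" "i < j" "j < l" "l < k"
    and bd: "bi dvd q" "bj dvd q" "bl dvd q" "bi > 0" "bl > 0" "bj \<ge> 2"
    and cop: "coprime aj bj"
  shows "det2 (dd q k j) (dd q k l) * ai * bj * bl + (- det2 (dd q k i) (dd q k l)) * aj * bi * bl
          + det2 (dd q k i) (dd q k j) * al * bi * bj \<noteq> 0"
proof
  assume Z: "det2 (dd q k j) (dd q k l) * ai * bj * bl + (- det2 (dd q k i) (dd q k l)) * aj * bi * bl
          + det2 (dd q k i) (dd q k j) * al * bi * bj = 0"
  obtain m1 where m1: "det2 (vv q k j) (vv q k l) = q^(k+j-l) * (q*m1 - 1)" using det_vv ijl by blast
  obtain m2 where m2: "det2 (vv q k i) (vv q k l) = q^(k+i-l) * (q*m2 - 1)" using det_vv ijl by force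
  obtain m3 where m3: "det2 (vv q k i) (vv q k j) = q^(k+i-j) * (q*m3 - 1)" using det_vv ijl by force
  define N where "N = q^(k+i-l)"
  have N0: "N \<noteq> 0" unfolding N_def using q by simp
  have x1: "k+j-l = (k+i-l) + Suc (j-i-1)" using ijl by auto
  have p1: "q^(k+j-l) = N * q * q^(j-i-1)" unfolding N_def x1 power_add power_Suc by (simp only: mult.assoc)
  have x3: "k+i-j = (k+i-l) + Suc (l-j-1)" using ijl by auto
  have p3: "q^(k+i-j) = N * q * q^(l-j-1)" unfolding N_def x3 power_add power_Suc by (simp only: mult.assoc)
  define A where "A = cc q k j * cc q k l * q^(j-i-1) * (q*m1 - 1)"
  define C where "C = cc q k i * cc q k j * q^(l-j-1) * (q*m3 - 1)"
  define w where "w = - (cc q k i * cc q k l * (q*m2 - 1))"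
  have e1: "det2 (dd q k j) (dd q k l) = N*q*A" unfolding det2_dd m1 p1 A_def by (simp only: mult_ac)
  have e3: "det2 (dd q k i) (dd q k j) = N*q*C" unfolding det2_dd m3 p3 C_def by (simp only: mult_ac)
  have e2: "- det2 (dd q k i) (dd q k l) = N*w" unfolding det2_dd m2 w_def N_def by (simp only: mult_ac mult_minus_right mult_minus_left minus_minus)
  have ci: "q dvd (cc q k i - 1)" using cc_mod q ijl by simp
  have cl: "q dvd (cc q k l - 1)" using cc_mod q ijl by simp
  have "w - 1 = (cc q k i - 1) * cc q k l + (cc q k l - 1) - cc q k i * cc q k l * q * m2"
    unfolding w_def by (simp add: algebra_simps)
  moreover have "q dvd (cc q k i - 1) * cc q k l" using ci by (rule dvd_mult2)
  moreover have "q dvd cc q k i * cc q k l * q * m2" by (metis dvd_mult2 dvd_triv_right)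
  ultimately have wq: "q dvd (w - 1)" using cl by (metis dvd_add dvd_diff)
  have "N * (q*A*ai*bj*bl + w*aj*bi*bl + q*C*al*bi*bj) = 0"
    using Z unfolding e1 e2 e3 by (simp add: algebra_simps)
  then have inner: "q*A*ai*bj*bl + w*aj*bi*bl + q*C*al*bi*bj = 0" using N0 by simp
  obtain si where si: "q = bi * si" using bd(1) unfolding dvd_def by blast
  obtain sl where sl: "q = bl * sl" using bd(3) unfolding dvd_def by blast
  have "bi*bl*(si*A*ai*bj + w*aj + sl*C*al*bj) = 0"
    using inner by (subst (asm) si, subst (asm) sl) (simp add: algebra_simps)
  then have "si*A*ai*bj + w*aj + sl*C*al*bj = 0" using bd by simp
  then have "w*aj = bj * (- (si*A*ai + sl*C*al))" by (simp add: algebra_simps)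
  then have d1: "bj dvd w*aj" by simp
  have "bj dvd (w-1)" using dvd_trans[OF bd(2) wq] .
  then have "bj dvd (w-1)*aj" by (rule dvd_mult2)
  then have "bj dvd w*aj - (w-1)*aj" using d1 by (rule dvd_diff[rotated])
  then have "bj dvd aj" by (simp add: algebra_simps)
  then have "is_unit bj" using coprime_common_divisor[OF cop _ dvd_refl] by blast
  then show False using bd by simp
qed

lemma approx_contra:
  fixes ai aj al bi bj bl ali alj all :: int and xi xj xl eps M Q :: real
  assumes rel: "ali*xi + alj*xj + all*xl = 0"
    and ei: "\<bar>xi - ai/bi\<bar> < eps" and ej: "\<bar>xj - aj/bj\<bar> < eps" and el: "\<bar>xl - al/bl\<bar> < eps"
    and b: "0 < bi" "bi \<le> Q" "0 < bj" "bj \<le> Q" "0 < bl" "bl \<le> Q"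
    and M: "\<bar>ali\<bar> \<le> M" "\<bar>alj\<bar> \<le> M" "\<bar>all\<bar> \<le> M"
    and epsM: "3*M*eps < 1 / Q^3"
    and Z: "ali*ai*bj*bl + alj*aj*bi*bl + all*al*bi*bj \<noteq> 0"
  shows False
proof -
  define T :: real where "T = ali*(ai/bi) + alj*(aj/bj) + all*(al/bl)"
  have T1: "T = - (ali*(xi - ai/bi) + alj*(xj - aj/bj) + all*(xl - al/bl))"
    using rel unfolding T_def by (simp add: algebra_simps)
  have "\<bar>ali*(xi - ai/bi)\<bar> \<le> M*eps"
    unfolding abs_mult using M ei by (intro mult_mono) auto
  moreover have "\<bar>alj*(xj - aj/bj)\<bar> \<le> M*eps"
    unfolding abs_mult using M ej by (intro mult_mono) auto
  moreover have "\<bar>all*(xl - al/bl)\<bar> \<le> M*eps"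
    unfolding abs_mult using M el by (intro mult_mono) auto
  moreover have "\<bar>T\<bar> \<le> \<bar>ali*(xi - ai/bi)\<bar> + \<bar>alj*(xj - aj/bj)\<bar> + \<bar>all*(xl - al/bl)\<bar>"
    unfolding T1 abs_minus_cancel by (meson abs_triangle_ineq add_mono order_trans order_refl)
  ultimately have "\<bar>T\<bar> \<le> 3*M*eps" by linarith
  with epsM have Tlt: "\<bar>T\<bar> < 1/Q^3" by linarith
  define Zr :: real where "Zr = of_int (ali*ai*bj*bl + alj*aj*bi*bl + all*al*bi*bj)"
  have bpos: "(bi::real) * bj * bl > 0" using b by simp
  have TZ: "T = Zr / (bi*bj*bl)" unfolding T_def Zr_def using b by (simp add: field_simps)
  have "\<bar>Zr\<bar> \<ge> 1" unfolding Zr_def using Z by linarith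
  have "(bi::real)*bj*bl \<le> Q^3"
  proof -
    have "(bi::real)*bj \<le> Q*Q" using b by (intro mult_mono) auto
    then have "(bi::real)*bj*bl \<le> (Q*Q)*Q" using b by (intro mult_mono) auto
    then show ?thesis by (simp add: power3_eq_cube)
  qed
  moreover have "Q^3 > 0" using b by simp
  ultimately have "1/Q^3 \<le> 1/(bi*bj*bl)" using bpos by (intro divide_left_mono) auto
  also have "\<dots> \<le> \<bar>Zr\<bar>/(bi*bj*bl)" using \<open>\<bar>Zr\<bar> \<ge> 1\<close> bpos by (intro divide_right_mono) auto
  also have "\<dots> = \<bar>T\<bar>" unfolding TZ using bpos by simp
  finally show False using Tlt by linarith
qed


definition good :: "nat \<Rightarrow> real \<Rightarrow> real \<Rightarrow> bool" where
  "good Q eps x = (\<exists>a b :: int. coprime a b \<and> 2 \<le> b \<and> b \<le> int Q \<and> \<bar>x - of_int a / of_int b\<bar> < eps)"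

lemma triple_false:
  assumes q: "q \<ge> 2" and bq: "\<And>b::int. 2 \<le> b \<Longrightarrow> b \<le> int Q \<Longrightarrow> b dvd q"
    and Mb: "\<And>x y. x \<in> {1..k-1} \<Longrightarrow> y \<in> {1..k-1} \<Longrightarrow> \<bar>real_of_int (det2 (dd q k x) (dd q k y))\<bar> \<le> M"
    and epsM: "3*M*eps < 1 / (real Q)^3"
    and ijl: "1 \<le> i" "i < j" "j < l" "l \<le> k - 1"
    and gi: "good Q eps (dotp u (dd q k i))" and gj: "good Q eps (dotp u (dd q k j))"
    and gl: "good Q eps (dotp u (dd q k l))"
  shows False
proof -
  obtain ai bi where ai: "coprime ai bi" "2 \<le> bi" "bi \<le> int Q" "\<bar>dotp u (dd q k i) - ai/bi\<bar> < eps"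
    using gi unfolding good_def by blast
  obtain aj bj where aj: "coprime aj bj" "2 \<le> bj" "bj \<le> int Q" "\<bar>dotp u (dd q k j) - aj/bj\<bar> < eps"
    using gj unfolding good_def by blast
  obtain al bl where al: "coprime al bl" "2 \<le> bl" "bl \<le> int Q" "\<bar>dotp u (dd q k l) - al/bl\<bar> < eps"
    using gl unfolding good_def by blast
  have lk: "l < k" using ijl by linarith
  have Z: "det2 (dd q k j) (dd q k l) * ai * bj * bl + (- det2 (dd q k i) (dd q k l)) * aj * bi * bl
          + det2 (dd q k i) (dd q k j) * al * bi * bj \<noteq> 0"
    using key[OF q ijl(1-3) lk bq[OF ai(2,3)] bq[OF aj(2,3)] bq[OF al(2,3)] _ _ aj(2) aj(1)] ai al by simp
  show False
  proof (rule approx_contra[where ali = "det2 (dd q k j) (dd q k l)" and alj = "- det2 (dd q k i) (dd q k l)"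
        and all = "det2 (dd q k i) (dd q k j)" and Q = "real Q" and M = M and eps = eps, OF _ ai(4) aj(4) al(4)])
    show "real_of_int (det2 (dd q k j) (dd q k l)) * dotp u (dd q k i) +
      real_of_int (- det2 (dd q k i) (dd q k l)) * dotp u (dd q k j) +
      real_of_int (det2 (dd q k i) (dd q k j)) * dotp u (dd q k l) = 0"
      using det_ident[of "dd q k j" "dd q k l" u "dd q k i"] by simp
    show "0 < bi" "0 < bj" "0 < bl"
      using ai aj al by simp_all
    show "real_of_int bi \<le> real Q" "real_of_int bj \<le> real Q" "real_of_int bl \<le> real Q"
      using ai aj al by linarith+
    show "real_of_int \<bar>det2 (dd q k j) (dd q k l)\<bar> \<le> M"
      "real_of_int \<bar>- det2 (dd q k i) (dd q k l)\<bar> \<le> M"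
      "real_of_int \<bar>det2 (dd q k i) (dd q k j)\<bar> \<le> M"
      using Mb ijl by auto
  qed (use epsM Z in auto)
qed

lemma negpt_negpt[simp]: "negpt (negpt d) = d" unfolding negpt_def by simp
lemma dotp_neg[simp]: "dotp u (negpt d) = - dotp u d" unfolding negpt_def dotp_def by simp
lemma pm_neg: "d \<in> pmDqk q k \<Longrightarrow> negpt d \<in> pmDqk q k"
  unfolding pmDqk_def by (auto simp: image_iff)

lemma good_neg: "good Q eps x \<Longrightarrow> good Q eps (- x)"
proof -
  assume "good Q eps x"
  then obtain a b :: int where h: "coprime a b" "2 \<le> b" "b \<le> int Q" "\<bar>x - a/b\<bar> < eps"
    unfolding good_def by blast
  have "\<bar>- x - of_int (-a)/b\<bar> = \<bar>x - a/b\<bar>" by (simp add: abs_minus_commute) 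
  then show "good Q eps (- x)" unfolding good_def using h
    by (intro exI[of _ "-a"] exI[of _ b]) auto
qed


theorem lemma6:
  fixes Q k :: nat
  assumes "Q \<ge> 2" and "k \<ge> 2"
  shows "\<exists>\<epsilon>::real. \<epsilon> > 0 \<and> (\<forall>u :: real \<times> real.
     (let S = {d \<in> pmDqk (int (fact Q)) k. \<exists>a b :: int. a \<noteq> 0 \<and> b \<noteq> 0 \<and> coprime a b \<and>
                  2 \<le> b \<and> b \<le> int Q \<and> \<bar>dotp u d - of_int a / of_int b\<bar> < \<epsilon>}
      in card S \<le> 4 \<and> negpt ` S = S))"
proof -
  obtain q where qdef: "q = int (fact Q)" by blast
  have q2: "q \<ge> 2" using fact_ge_self[of Q] assms(1) unfolding qdef by linarith
  have bq: "b dvd q" if "2 \<le> b" "b \<le> int Q" for b :: int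
  proof -
    have "nat b dvd fact Q" using that by (intro dvd_fact) auto
    then have "int (nat b) dvd int (fact Q)" by (simp only: int_dvd_int_iff)
    then show ?thesis using that unfolding qdef by simp
  qed
  define M :: real where "M = (\<Sum>x\<in>{1..k-1}. \<Sum>y\<in>{1..k-1}. \<bar>real_of_int (det2 (dd q k x) (dd q k y))\<bar>)"
  have M0: "M \<ge> 0" unfolding M_def by (intro sum_nonneg) auto
  have Mb: "\<bar>real_of_int (det2 (dd q k x) (dd q k y))\<bar> \<le> M" if "x \<in> {1..k-1}" "y \<in> {1..k-1}" for x y
  proof -
    have "\<bar>real_of_int (det2 (dd q k x) (dd q k y))\<bar> \<le> (\<Sum>y\<in>{1..k-1}. \<bar>real_of_int (det2 (dd q k x) (dd q k y))\<bar>)"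
      using that by (intro member_le_sum) auto
    also have "\<dots> \<le> M" unfolding M_def using that
      by (intro member_le_sum[where f = "\<lambda>x. \<Sum>y\<in>{1..k-1}. \<bar>real_of_int (det2 (dd q k x) (dd q k y))\<bar>"])
        (auto intro: sum_nonneg)
    finally show ?thesis .
  qed
  define eps :: real where "eps = 1 / ((real Q)^3 * (3*M+1))"
  have Qp: "(real Q)^3 > 0" using assms by simp
  have eps0: "eps > 0" unfolding eps_def using Qp M0 by simp
  have h1: "(3*M+1)*eps = 1 / (real Q)^3"
  proof -
    have c0: "3*M+1 \<noteq> 0" using M0 by simp
    have a0: "(real Q)^3 \<noteq> 0" using Qp by simp
    have "(3*M+1) * (1 / ((real Q)^3 * (3*M+1))) = (3*M+1) / ((3*M+1) * (real Q)^3)" by (simp add: mult.commute)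
    also have "\<dots> = 1 / (real Q)^3" using c0 by (rule nonzero_divide_mult_cancel_left)
    finally show ?thesis unfolding eps_def .
  qed
  then have "3*M*eps + eps = 1 / (real Q)^3" by (simp add: distrib_right)
  then have epsM: "3*M*eps < 1 / (real Q)^3" using eps0 by linarith
  show ?thesis
  proof (intro exI[of _ eps] conjI allI)
    show "eps > 0" by (rule eps0)
    fix u :: "real \<times> real"
    define S where "S = {d \<in> pmDqk q k. good Q eps (dotp u d)}"
    have Seq: "{d \<in> pmDqk (int (fact Q)) k. \<exists>a b :: int. a \<noteq> 0 \<and> b \<noteq> 0 \<and> coprime a b \<and>
                  2 \<le> b \<and> b \<le> int Q \<and> \<bar>dotp u d - of_int a / of_int b\<bar> < eps} = S"
    proof -
      have nz: "a \<noteq> 0" if "coprime a b" "2 \<le> b" for a b :: int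
      proof
        assume "a = 0"
        then have "b dvd 1" using that(1) by simp
        then have "b \<le> 1" by (rule zdvd_imp_le) simp
        then show False using that(2) by simp
      qed
      have bnz: "b \<noteq> 0" if "2 \<le> b" for b :: int using that by simp
      show ?thesis unfolding S_def good_def qdef[symmetric]
        apply (rule Collect_cong)
        apply (rule conj_cong[OF refl])
        using nz bnz by blast
    qed
    have symm: "negpt ` S = S"
    proof
      show "negpt ` S \<subseteq> S" unfolding S_def using pm_neg good_neg by auto
      show "S \<subseteq> negpt ` S"
      proof
        fix d assume "d \<in> S"
        then have "negpt d \<in> S" unfolding S_def using pm_neg good_neg by auto
        then show "d \<in> negpt ` S" using image_eqI[of d negpt "negpt d"] by simp
      qed
    qed
    define J where "J = {x \<in> {1..k-1}. dd q k x \<in> S \<or> negpt (dd q k x) \<in> S}"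
    have finJ: "finite J" unfolding J_def by simp
    have Jgood: "good Q eps (dotp u (dd q k x))" if "x \<in> J" for x
    proof -
      have "good Q eps (dotp u (dd q k x)) \<or> good Q eps (dotp u (negpt (dd q k x)))"
        using that unfolding J_def S_def by auto
      then show ?thesis using good_neg[of Q eps "- dotp u (dd q k x)"] by auto
    qed
    have Jsub: "J \<subseteq> {1..k-1}" unfolding J_def by auto
    have sorted: False if "i \<in> J" "j \<in> J" "l \<in> J" "i < j" "j < l" for i j l
    proof -
      have "i \<in> {1..k-1}" "l \<in> {1..k-1}" using Jsub that by auto
      then have "1 \<le> i" "l \<le> k - 1" by auto
      then show False using triple_false[OF q2 bq Mb epsM _ that(4) that(5) _ Jgood[OF that(1)] Jgood[OF that(2)] Jgood[OF that(3)]]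
        by blast
    qed
    have cJ: "card J \<le> 2"
    proof (rule ccontr)
      assume "\<not> card J \<le> 2"
      then have "3 \<le> card J" by linarith
      then obtain T where T: "T \<subseteq> J" "card T = 3" by (rule obtain_subset_with_card_n)
      then obtain x y z where "T = {x,y,z}" "x \<noteq> y" "y \<noteq> z" "x \<noteq> z" by (auto simp: card_3_iff)
      then have J3: "x \<in> J" "y \<in> J" "z \<in> J" and ne: "x \<noteq> y" "y \<noteq> z" "x \<noteq> z" using T by auto
      show False using sorted[OF J3(1,2,3)] sorted[OF J3(1,3,2)] sorted[OF J3(2,1,3)]
        sorted[OF J3(2,3,1)] sorted[OF J3(3,1,2)] sorted[OF J3(3,2,1)] ne by linarith
    qed
    have Ssub: "S \<subseteq> dd q k ` J \<union> (negpt \<circ> dd q k) ` J"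
    proof
      fix d assume dS: "d \<in> S"
      then have "d \<in> pmDqk q k" unfolding S_def by simp
      then obtain x where x: "x \<in> {1..k-1}" "d = dd q k x \<or> d = negpt (dd q k x)"
        unfolding pmDqk_def Dqk_eq by auto
      then have "x \<in> J" unfolding J_def using dS by auto
      then show "d \<in> dd q k ` J \<union> (negpt \<circ> dd q k) ` J" using x by auto
    qed
    have "card S \<le> card (dd q k ` J \<union> (negpt \<circ> dd q k) ` J)"
      using Ssub finJ by (intro card_mono) auto
    also have "\<dots> \<le> card (dd q k ` J) + card ((negpt \<circ> dd q k) ` J)" by (rule card_Un_le)
    also have "\<dots> \<le> card J + card J" by (intro add_mono card_image_le finJ)
    finally have "card S \<le> 4" using cJ by linarith
    then show "let S = {d \<in> pmDqk (int (fact Q)) k. \<exists>a b :: int. a \<noteq> 0 \<and> b \<noteq> 0 \<and> coprime a b \<and>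
                  2 \<le> b \<and> b \<le> int Q \<and> \<bar>dotp u d - of_int a / of_int b\<bar> < eps}
      in card S \<le> 4 \<and> negpt ` S = S" unfolding Seq Let_def using symm by simp
  qed
qed

end
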